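(* Let $\mathfrak e$ be an edge, $p\in\mathbb N$, $\tau_{\mathfrak e}>0$, let boundary data $\bar{\vec u}_{\mathfrak n},\bar{\vec r}_{\mathfrak n}\in\mathbb R^3$ be given for the two endpoints $\mathfrak n$ of $\mathfrak e$, and let $\vec f_{\mathfrak e},\vec g_{\mathfrak e}\in(L^2(\mathfrak e))^3$. Then there is a unique quadruple $\bar{\vec u}_{\mathfrak e},\bar{\vec r}_{\mathfrak e},\bar{\vec n}_{\mathfrak e},\bar{\vec m}_{\mathfrak e}\in V_p^{\mathfrak e}$ such that for all $\bar{\vec p},\bar{\vec q},\bar{\vec v},\bar{\vec w}\in V_p^{\mathfrak e}$: \begin{align*} -(C_{\vec n}^{-1}\bar{\vec n}_{\mathfrak e},\bar{\vec p})_{\mathfrak e}+(\bar{\vec u}_{\mathfrak e},\partial_x\bar{\vec p})_{\mathfrak e}-(\vec i_{\mathfrak e}\times\bar{\vec r}_{\mathfrak e},\bar{\vec p})_{\mathfrak e}&=\langle\bar{\vec u}_{\mathfrak n},\bar{\vec p}\,\nu_{\mathfrak e}\rangle_{\mathfrak e},\\ -(C_{\vec m}^{-1}\bar{\vec m}_{\mathfrak e},\bar{\vec q})_{\mathfrak e}+(\bar{\vec r}_{\mathfrak e},\partial_x\bar{\vec q})_{\mathfrak e}&=\langle\bar{\vec r}_{\mathfrak n},\bar{\vec q}\,\nu_{\mathfrak e}\rangle_{\mathfrak e},\\ (\partial_x\bar{\vec n}_{\mathfrak e},\bar{\vec v})_{\mathfrak e}+\tau_{\mathfrak e}\langle\bar{\vec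 u}_{\mathfrak e},\bar{\vec v}\rangle_{\mathfrak e}&=(\vec f_{\mathfrak e},\bar{\vec v})_{\mathfrak e}+\tau_{\mathfrak e}\langle\bar{\vec u}_{\mathfrak n},\bar{\vec v}\rangle_{\mathfrak e},\\ (\vec i_{\mathfrak e}\times\bar{\vec n}_{\mathfrak e},\bar{\vec w})_{\mathfrak e}+(\partial_x\bar{\vec m}_{\mathfrak e},\bar{\vec w})_{\mathfrak e}+\tau_{\mathfrak e}\langle\bar{\vec r}_{\mathfrak e},\bar{\vec w}\rangle_{\mathfrak e}&=(\vec g_{\mathfrak e},\bar{\vec w})_{\mathfrak e}+\tau_{\mathfrak e}\langle\bar{\vec r}_{\mathfrak n},\bar{\vec w}\rangle_{\mathfrak e}. \end{align*}
   Context: An edge $\mathfrak e$ is the straight segment in $\mathbb R^3$ joining two distinct nodes $\mathfrak n_k,\mathfrak n_\ell$ ($k<\ell$), of length $h_{\mathfrak e}=|\mathfrak n_\ell-\mathfrak n_k|$, direction $\vec i_{\mathfrak e}=(\mathfrak n_\ell-\mathfrak n_k)/h_{\mathfrak e}$, scalar normals $\nu_{\mathfrak e}(\mathfrak n_k)=-1$, $\nu_{\mathfrak e}(\mathfrak n_\ell)=+1$. $x$ is the arclength coordinate on $\mathfrak e$ increasing in direction $\vec i_{\mathfrak e}$, $\partial_x$ its derivative, $\times$ the cross product. $C_{\vec n},C_{\vec m}$ are symmetric $\mathbb R^{3\times3}$-valued functions on $\mathfrak e$ satisfying $\alpha_{\vec n}|\xi|^2\le (C_{\vec n}(x)\xi)\cdot\xi\le\beta_{\vec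 n}|\xi|^2$, $\alpha_{\vec m}|\xi|^2\le (C_{\vec m}(x)\xi)\cdot\xi\le\beta_{\vec m}|\xi|^2$ for all $\xi\in\mathbb R^3$, $x\in\mathfrak e$, with constants $0<\alpha_{\cdot},\beta_{\cdot}<\infty$. $\mathds P_p(\mathfrak e)$ is the space of polynomials on $\mathfrak e$ of degree at most $p$ and $V_p^{\mathfrak e}=(\mathds P_p(\mathfrak e))^3$. Notation: $(\vec v,\vec w)_{\mathfrak e}=\int_{\mathfrak e}\vec v\cdot\vec w\,\mathrm d\sigma$; $\langle\vec a,\vec b\rangle_{\mathfrak e}=\sum_{\mathfrak n\text{ endpoint of }\mathfrak e}\vec a(\mathfrak n)\cdot\vec b(\mathfrak n)$, also applied to quantities only defined at endpoints (e.g. $\langle\bar{\vec u}_{\mathfrak n},\bar{\vec p}\,\nu_{\mathfrak e}\rangle_{\mathfrak e}=\sum_{\mathfrak n}\bar{\vec u}_{\mathfrak n}\cdot\bar{\vec p}(\mathfrak n)\nu_{\mathfrak e}(\mathfrak n)$). *)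

theory Defs
  imports "HOL-Analysis.Analysis" "HOL-Computational_Algebra.Polynomial"
begin

text \<open>An edge from node nk to node nl (nk the node with smaller index) is parametrised
  by arclength x \<in> [0, h], h = |nl - nk|; x = 0 is nk (normal -1), x = h is nl (normal +1).\<close>

definition edge_len :: "real^3 \<Rightarrow> real^3 \<Rightarrow> real" where
  "edge_len nk nl = norm (nl - nk)"

definition edge_dir :: "real^3 \<Rightarrow> real^3 \<Rightarrow> real^3" where
  "edge_dir nk nl = (1 / edge_len nk nl) *\<^sub>R (nl - nk)"

definition Vp :: "nat \<Rightarrow> (real \<Rightarrow> real^3) set" where
  "Vp p = {v. \<forall>i. \<exists>q :: real poly. degree q \<le> p \<and> (\<forall>x. v x $ i = poly q x)}"

definition dx :: "(real \<Rightarrow> real^3) \<Rightarrow> real \<Rightarrow> real^3" where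
  "dx v x = vector_derivative v (at x)"

definition l2_edge :: "real \<Rightarrow> (real \<Rightarrow> real^3) \<Rightarrow> (real \<Rightarrow> real^3) \<Rightarrow> real" where
  "l2_edge h v w = (LINT x:{0..h}|lborel. v x \<bullet> w x)"

definition bdry_edge :: "real \<Rightarrow> (real \<Rightarrow> real^3) \<Rightarrow> (real \<Rightarrow> real^3) \<Rightarrow> real" where
  "bdry_edge h a b = a 0 \<bullet> b 0 + a h \<bullet> b h"

definition L2_edge :: "real \<Rightarrow> (real \<Rightarrow> real^3) \<Rightarrow> bool" where
  "L2_edge h f \<longleftrightarrow> (\<lambda>x. indicator {0..h} x *\<^sub>R f x) \<in> borel_measurable lborel
     \<and> set_integrable lborel {0..h} (\<lambda>x. (norm (f x))\<^sup>2)"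

definition coeff_ok :: "real \<Rightarrow> (real \<Rightarrow> real^3^3) \<Rightarrow> real \<Rightarrow> real \<Rightarrow> bool" where
  "coeff_ok h C \<alpha> \<beta> \<longleftrightarrow> 0 < \<alpha> \<and> 0 < \<beta> \<and>
     (\<forall>i j. (\<lambda>x. indicator {0..h} x * (C x $ i $ j)) \<in> borel_measurable lborel) \<and>
     (\<forall>x\<in>{0..h}. transpose (C x) = C x \<and>
        (\<forall>\<xi>. \<alpha> * (norm \<xi>)\<^sup>2 \<le> (C x *v \<xi>) \<bullet> \<xi> \<and> (C x *v \<xi>) \<bullet> \<xi> \<le> \<beta> * (norm \<xi>)\<^sup>2))"

end

theory Submission
  imports Defs "HOL-Library.Function_Algebras"
begin
instantiation "fun" :: (type, real_vector) real_vector
begin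
definition scaleR_fun :: "real \<Rightarrow> ('a \<Rightarrow> 'b) \<Rightarrow> 'a \<Rightarrow> 'b" where
  "scaleR_fun c f = (\<lambda>x. c *\<^sub>R f x)"
instance by standard (auto simp: scaleR_fun_def fun_eq_iff scaleR_add_right scaleR_add_left)
end

lemma scaleR_fun_apply[simp]: "(c *\<^sub>R f) x = c *\<^sub>R f x"
  by (simp add: scaleR_fun_def)

lemma square_system:
  fixes V E :: "'v::real_vector set" and B :: "'v \<Rightarrow> 'v \<Rightarrow> real" and L :: "'v \<Rightarrow> real"
  assumes sub: "subspace V" and fin: "finite E" and sp: "V \<subseteq> span E"
    and B1: "\<And>x y c z. x\<in>V \<Longrightarrow> y\<in>V \<Longrightarrow> z\<in>V \<Longrightarrow> B (x + c *\<^sub>R y) z = B x z + c * B y z"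
    and B2: "\<And>x y c z. x\<in>V \<Longrightarrow> y\<in>V \<Longrightarrow> z\<in>V \<Longrightarrow> B z (x + c *\<^sub>R y) = B z x + c * B z y"
    and L1: "\<And>x y c. x\<in>V \<Longrightarrow> y\<in>V \<Longrightarrow> L (x + c *\<^sub>R y) = L x + c * L y"
    and inj: "\<And>x. x\<in>V \<Longrightarrow> (\<forall>y\<in>V. B x y = 0) \<Longrightarrow> x = 0"
  shows "\<exists>x\<in>V. \<forall>y\<in>V. B x y = L y"
proof -
  have B0z: "B 0 z = 0" if "z \<in> V" for z
    using B1[of 0 0 z 1] that subspace_0[OF sub] by simp
  have Bz0: "B z 0 = 0" if "z \<in> V" for z
    using B2[of 0 0 z 1] that subspace_0[OF sub] by simp
  have L0: "L 0 = 0"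
    using L1[of 0 0 1] subspace_0[OF sub] by simp
  have Badd: "B (x + y) z = B x z + B y z" if "x\<in>V" "y\<in>V" "z\<in>V" for x y z
    using B1[of x y z 1] that by simp
  have Bsc: "B (c *\<^sub>R y) z = c * B y z" if "y\<in>V" "z\<in>V" for y z c
    using B1[of 0 y z c] that B0z subspace_0[OF sub] by simp
  have Badd2: "B z (x + y) = B z x + B z y" if "x\<in>V" "y\<in>V" "z\<in>V" for x y z
    using B2[of x y z 1] that by simp
  have Bsc2: "B z (c *\<^sub>R y) = c * B z y" if "y\<in>V" "z\<in>V" for y z c
    using B2[of 0 y z c] that Bz0 subspace_0[OF sub] by simp
  have Ladd: "L (x + y) = L x + L y" if "x\<in>V" "y\<in>V" for x y
    using L1[of x y 1] that by simp
  have Lsc: "L (c *\<^sub>R y) = c * L y" if "y\<in>V" for y c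
    using L1[of 0 y c] that L0 subspace_0[OF sub] by simp
  have sumV: "(\<Sum>e\<in>S. a e *\<^sub>R e) \<in> V" if "S \<subseteq> V" for S a
    by (rule subspace_sum[OF sub]) (use that subspace_scale[OF sub] in auto)
  have SB1: "B (\<Sum>e\<in>S. a e *\<^sub>R e) z = (\<Sum>e\<in>S. a e * B e z)" if "finite S" "S \<subseteq> V" "z \<in> V" for S a z
    using that
  proof (induction S rule: finite_induct)
    case empty then show ?case using B0z by simp
  next
    case (insert x F)
    then have "(\<Sum>e\<in>F. a e *\<^sub>R e) \<in> V" using sumV by auto
    with insert show ?case by (simp add: Badd Bsc subspace_scale[OF sub])
  qed
  have SB2: "B z (\<Sum>e\<in>S. a e *\<^sub>R e) = (\<Sum>e\<in>S. a e * B z e)" if "finite S" "S \<subseteq> V" "z \<in> V" for S a z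
    using that
  proof (induction S rule: finite_induct)
    case empty then show ?case using Bz0 by simp
  next
    case (insert x F)
    then have "(\<Sum>e\<in>F. a e *\<^sub>R e) \<in> V" using sumV by auto
    with insert show ?case by (simp add: Badd2 Bsc2 subspace_scale[OF sub])
  qed
  have SL: "L (\<Sum>e\<in>S. a e *\<^sub>R e) = (\<Sum>e\<in>S. a e * L e)" if "finite S" "S \<subseteq> V" for S a
    using that
  proof (induction S rule: finite_induct)
    case empty then show ?case using L0 by simp
  next
    case (insert x F)
    then have "(\<Sum>e\<in>F. a e *\<^sub>R e) \<in> V" using sumV by auto
    with insert show ?case by (simp add: Ladd Lsc subspace_scale[OF sub])
  qed
  obtain B0 where B0V: "B0 \<subseteq> V" and indB0: "independent B0" and VB0: "V \<subseteq> span B0"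
    by (rule real_vector.basis_exists[of V])
  have finB0: "finite B0"
    using real_vector.independent_span_bound[OF fin indB0] B0V sp by auto
  have spB0: "span B0 = V"
    using VB0 span_minimal[OF B0V sub] by (rule subset_antisym[rotated])
  have repr: "\<exists>a. y = (\<Sum>e\<in>B0. a e *\<^sub>R e)" if "y \<in> V" for y
    using that spB0 real_vector.span_finite[OF finB0] by auto
  have coeff0: "\<forall>e\<in>B0. a e = 0" if "(\<Sum>e\<in>B0. a e *\<^sub>R e) = 0" for a
  proof -
    have "\<forall>S\<subseteq>B0. finite S \<longrightarrow> (\<forall>u. (\<Sum>v\<in>S. u v *\<^sub>R v) = 0 \<longrightarrow> (\<forall>v\<in>S. u v = 0))"
      using indB0 unfolding real_vector.independent_explicit_finite_subsets by simp
    from this[rule_format, OF order_refl finB0 that] show ?thesis by blast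
  qed
  define F where "F x = (\<Sum>e\<in>B0. B x e *\<^sub>R e)" for x
  have FV: "F x \<in> V" for x unfolding F_def using sumV B0V by auto
  have Fsum: "F (\<Sum>e\<in>B0. a e *\<^sub>R e) = (\<Sum>e\<in>B0. a e *\<^sub>R F e)" for a
  proof -
    have "F (\<Sum>e\<in>B0. a e *\<^sub>R e) = (\<Sum>e'\<in>B0. (\<Sum>e\<in>B0. a e * B e e') *\<^sub>R e')"
      unfolding F_def using SB1[OF finB0 B0V] B0V by (intro sum.cong) auto
    also have "\<dots> = (\<Sum>e\<in>B0. a e *\<^sub>R F e)"
      unfolding F_def scaleR_sum_left scaleR_sum_right
      by (subst sum.swap) (simp add: scaleR_scaleR)
    finally show ?thesis .
  qed
  have F0: "F x = 0 \<Longrightarrow> x \<in> V \<Longrightarrow> x = 0" for x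
  proof -
    assume "F x = 0" "x \<in> V"
    then have z: "\<forall>e\<in>B0. B x e = 0" using coeff0[of "\<lambda>e. B x e"] unfolding F_def by blast
    have "\<forall>y\<in>V. B x y = 0"
    proof
      fix y assume "y \<in> V"
      then obtain a where "y = (\<Sum>e\<in>B0. a e *\<^sub>R e)" using repr by blast
      then show "B x y = 0" using SB2[OF finB0 B0V \<open>x\<in>V\<close>] z by simp
    qed
    then show "x = 0" using inj \<open>x\<in>V\<close> by blast
  qed
  have Fdiff: "F x - F y = F (x - y)" if "x\<in>V" "y\<in>V" for x y
  proof -
    have "B (x - y) e = B x e - B y e" if "e \<in> B0" for e
      using B1[of x y e "-1"] that \<open>x\<in>V\<close> \<open>y\<in>V\<close> B0V by auto
    then show ?thesis unfolding F_def
      by (simp add: sum_subtractf[symmetric] scaleR_diff_left)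
  qed
  have injF: "inj_on F V"
  proof (rule inj_onI)
    fix x y assume "x \<in> V" "y \<in> V" "F x = F y"
    then have "F (x - y) = 0" using Fdiff[of x y] by simp
    then have "x - y = 0" using F0 subspace_diff[OF sub \<open>x\<in>V\<close> \<open>y\<in>V\<close>] by blast
    then show "x = y" by simp
  qed
  have indFB: "independent (F ` B0)"
  proof (rule real_vector.independent_if_scalars_zero)
    show "finite (F ` B0)" using finB0 by simp
  next
    fix f b assume s: "(\<Sum>x\<in>F ` B0. f x *\<^sub>R x) = 0" and b: "b \<in> F ` B0"
    have injB0: "inj_on F B0" by (rule inj_on_subset[OF injF B0V])
    have "(\<Sum>e\<in>B0. f (F e) *\<^sub>R F e) = 0"
      using s sum.reindex[OF injB0, of "\<lambda>x. f x *\<^sub>R x"] by simp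
    then have "F (\<Sum>e\<in>B0. f (F e) *\<^sub>R e) = 0" using Fsum by simp
    then have "(\<Sum>e\<in>B0. f (F e) *\<^sub>R e) = 0" by (rule F0[OF _ sumV[OF B0V]])
    then show "f b = 0" using coeff0[of "\<lambda>e. f (F e)"] b by auto
  qed
  have cardFB: "card (F ` B0) = card B0"
    by (rule card_image[OF inj_on_subset[OF injF B0V]])
  have surj: "t \<in> span (F ` B0)" if "t \<in> V" for t
  proof (rule ccontr)
    assume nt: "t \<notin> span (F ` B0)"
    have ind2: "independent (insert t (F ` B0))" by (rule real_vector.independent_insertI[OF nt indFB])
    have sub2: "insert t (F ` B0) \<subseteq> span B0" using that FV VB0 by auto
    have "card (insert t (F ` B0)) \<le> card B0"
      using real_vector.independent_span_bound[OF finB0 ind2 sub2] by simp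
    moreover have "t \<notin> F ` B0" using nt span_base[of t "F ` B0"] by auto
    ultimately show False using cardFB finB0 by simp
  qed
  define t where "t = (\<Sum>e\<in>B0. L e *\<^sub>R e)"
  have "t \<in> V" unfolding t_def using sumV B0V by blast
  then obtain u where "t = (\<Sum>b\<in>F ` B0. u b *\<^sub>R b)"
  proof -
    have "t \<in> range (\<lambda>u. \<Sum>b\<in>F ` B0. u b *\<^sub>R b)"
      using surj[OF \<open>t \<in> V\<close>] real_vector.span_finite[of "F ` B0"] finB0 by simp
    then show ?thesis using that by auto
  qed
  also have "\<dots> = (\<Sum>e\<in>B0. u (F e) *\<^sub>R F e)"
    using sum.reindex[OF inj_on_subset[OF injF B0V], of "\<lambda>x. u x *\<^sub>R x"] by simp
  also have "\<dots> = F (\<Sum>e\<in>B0. u (F e) *\<^sub>R e)" using Fsum by simp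
  finally have tF: "t = F x" if "x = (\<Sum>e\<in>B0. u (F e) *\<^sub>R e)" for x using that by simp
  define x where "x = (\<Sum>e\<in>B0. u (F e) *\<^sub>R e)"
  have xV: "x \<in> V" unfolding x_def by (rule sumV[OF B0V])
  have "(\<Sum>e\<in>B0. (B x e - L e) *\<^sub>R e) = F x - t"
    unfolding F_def t_def scaleR_diff_left by (rule sum_subtractf)
  also have "\<dots> = 0" using tF[OF x_def] by simp
  finally have "\<forall>e\<in>B0. B x e - L e = 0" by (rule coeff0)
  then have eq: "\<forall>e\<in>B0. B x e = L e" by simp
  show ?thesis
  proof (intro bexI[OF _ xV] ballI)
    fix y assume "y \<in> V"
    then obtain a where "y = (\<Sum>e\<in>B0. a e *\<^sub>R e)" using repr by blast
    then show "B x y = L y" using SB2[OF finB0 B0V xV] SL[OF finB0 B0V] eq by simp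
  qed
qed

lemma VpE:
  assumes "v \<in> Vp p"
  obtains q where "\<And>i. degree (q i) \<le> p" "\<And>i x. v x $ i = poly (q i) x"
proof -
  have "\<forall>i. \<exists>q. degree q \<le> p \<and> (\<forall>x. v x $ i = poly q x)" using assms by (simp add: Vp_def)
  then obtain q where "\<forall>i. degree (q i) \<le> p \<and> (\<forall>x. v x $ i = poly (q i) x)" by metis
  then show ?thesis using that by blast
qed

lemma Vp_eq: "(\<And>i x. v x $ i = poly (q i) x) \<Longrightarrow> v = (\<lambda>x. \<chi> i. poly (q i) x)"
  by (simp add: fun_eq_iff vec_eq_iff)

lemma VpI: "(\<And>i. degree (q i) \<le> p) \<Longrightarrow> (\<lambda>x. \<chi> i. poly (q i) x) \<in> Vp p"
  by (auto simp: Vp_def)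

lemma Vp_zero: "(\<lambda>x. 0) \<in> Vp p"
  unfolding Vp_def by (intro CollectI allI exI[of _ 0]) simp

lemma Vp_comb:
  assumes "u \<in> Vp p" "v \<in> Vp p"
  shows "(\<lambda>x. u x + c *\<^sub>R v x) \<in> Vp p"
proof -
  obtain q1 where q1: "\<And>i. degree (q1 i) \<le> p" "\<And>i x. u x $ i = poly (q1 i) x" using VpE[OF assms(1)] by metis
  obtain q2 where q2: "\<And>i. degree (q2 i) \<le> p" "\<And>i x. v x $ i = poly (q2 i) x" using VpE[OF assms(2)] by metis
  have "(\<lambda>x. \<chi> i. poly (q1 i + smult c (q2 i)) x) \<in> Vp p"
    by (rule VpI) (metis degree_add_le degree_smult_le order_trans q1(1) q2(1))
  moreover have "(\<lambda>x. \<chi> i. poly (q1 i + smult c (q2 i)) x) = (\<lambda>x. u x + c *\<^sub>R v x)"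
    by (simp add: fun_eq_iff vec_eq_iff q1 q2)
  ultimately show ?thesis by simp
qed

lemma Vp_comb': "u \<in> Vp p \<Longrightarrow> v \<in> Vp p \<Longrightarrow> u + c *\<^sub>R v \<in> Vp p"
  using Vp_comb[of u p v c] by (simp add: plus_fun_def scaleR_fun_def)

lemma Vp_cont:
  assumes "v \<in> Vp p" shows "continuous_on S v"
proof -
  obtain q where q: "\<And>i x. v x $ i = poly (q i) x" using VpE[OF assms] by metis
  show ?thesis unfolding Vp_eq[OF q]
    by (intro continuous_on_vec_lambda continuous_intros)
qed

lemma vec_poly_deriv:
  "((\<lambda>x. \<chi> i. poly (q i) x) has_vector_derivative (\<chi> i. poly (pderiv (q i)) x)) (at x)"
proof -
  have e: "(\<lambda>x. \<chi> i. poly (q i) x) = (\<lambda>x. \<Sum>i\<in>UNIV. poly (q i) x *\<^sub>R axis i (1::real))"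
    by (simp add: fun_eq_iff vec_eq_iff axis_def if_distrib cong: if_cong)
  have e2: "(\<chi> i. poly (pderiv (q i)) x) = (\<Sum>i\<in>UNIV. poly (pderiv (q i)) x *\<^sub>R axis i (1::real))"
    by (simp add: vec_eq_iff axis_def if_distrib cong: if_cong)
  have "((\<lambda>x. \<Sum>i\<in>UNIV. poly (q i) x *\<^sub>R axis i (1::real)) has_vector_derivative
          (\<Sum>i\<in>UNIV. poly (pderiv (q i)) x *\<^sub>R axis i (1::real))) (at x)"
    apply (rule has_vector_derivative_sum)
    using has_vector_derivative_scaleR[OF poly_DERIV has_vector_derivative_const]
    by simp
  then show ?thesis unfolding e e2 .
qed

lemma Vp_dx:
  assumes "\<And>i x. v x $ i = poly (q i) x"
  shows "dx v = (\<lambda>x. \<chi> i. poly (pderiv (q i)) x)"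
  unfolding dx_def Vp_eq[OF assms] by (simp add: fun_eq_iff vector_derivative_at[OF vec_poly_deriv])

lemma Vp_dx_Vp: "v \<in> Vp p \<Longrightarrow> dx v \<in> Vp p"
proof -
  assume "v \<in> Vp p"
  then obtain q where q: "\<And>i. degree (q i) \<le> p" "\<And>i x. v x $ i = poly (q i) x" using VpE by metis
  show ?thesis unfolding Vp_dx[OF q(2)]
    by (rule VpI) (metis degree_pderiv q(1) diff_le_self order_trans)
qed

lemma dx_comb:
  assumes "u \<in> Vp p" "v \<in> Vp p"
  shows "dx (\<lambda>x. u x + c *\<^sub>R v x) = (\<lambda>x. dx u x + c *\<^sub>R dx v x)"
proof -
  obtain q1 where q1: "\<And>i. degree (q1 i) \<le> p" "\<And>i x. u x $ i = poly (q1 i) x" using VpE[OF assms(1)] by metis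
  obtain q2 where q2: "\<And>i. degree (q2 i) \<le> p" "\<And>i x. v x $ i = poly (q2 i) x" using VpE[OF assms(2)] by metis
  have "\<And>i x. u x $ i + c * v x $ i = poly (q1 i + smult c (q2 i)) x" by (simp add: q1 q2)
  then have "dx (\<lambda>x. u x + c *\<^sub>R v x) = (\<lambda>x. \<chi> i. poly (pderiv (q1 i + smult c (q2 i))) x)"
    by (intro Vp_dx) simp
  then show ?thesis by (simp add: Vp_dx[OF q1(2)] Vp_dx[OF q2(2)] fun_eq_iff vec_eq_iff pderiv_add pderiv_smult)
qed

lemma dx_zero: "dx (\<lambda>x. 0) = (\<lambda>x. 0)"
  using Vp_dx[of "\<lambda>x. 0" "\<lambda>i. 0"] by (simp add: vec_eq_iff fun_eq_iff pderiv_0 zero_vec_def)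

lemma Vp_zero_on:
  assumes "v \<in> Vp p" "h > 0" "\<And>x. x \<in> {0..h} \<Longrightarrow> v x = 0"
  shows "v = (\<lambda>x. 0)"
proof -
  obtain q where q: "\<And>i x. v x $ i = poly (q i) x" using VpE[OF assms(1)] by metis
  have "q i = 0" for i
  proof (rule ccontr)
    assume "q i \<noteq> 0"
    then have "finite {x. poly (q i) x = 0}" by (rule poly_roots_finite)
    moreover have "{0..h} \<subseteq> {x. poly (q i) x = 0}" using assms(3) q by (auto simp: vec_eq_iff)
    ultimately show False using infinite_Icc[OF assms(2)] finite_subset by blast
  qed
  then show ?thesis by (simp add: fun_eq_iff vec_eq_iff q)
qed

definition okf :: "real \<Rightarrow> (real \<Rightarrow> real^3) \<Rightarrow> bool" where
  "okf h a \<longleftrightarrow> (\<lambda>x. indicator {0..h} x *\<^sub>R a x) \<in> borel_measurable lborel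
     \<and> set_integrable lborel {0..h} (\<lambda>x. norm (a x))"

lemma okf_cont:
  assumes "continuous_on UNIV a" shows "okf h a"
  unfolding okf_def
proof
  show "(\<lambda>x. indicator {0..h} x *\<^sub>R a x) \<in> borel_measurable lborel"
    using borel_measurable_continuous_on_indicator[of "{0..h}" a] assms
    by (simp add: continuous_on_subset)
  show "set_integrable lborel {0..h} (\<lambda>x. norm (a x))"
    by (rule borel_integrable_atLeastAtMost') (intro continuous_intros continuous_on_subset[OF assms]; simp)
qed

lemma okf_Vp: "v \<in> Vp p \<Longrightarrow> okf h v"
  by (rule okf_cont) (rule Vp_cont)

lemma okf_bound:
  assumes meas: "(\<lambda>x. indicator {0..h} x *\<^sub>R a x) \<in> borel_measurable lborel"
    and g: "set_integrable lborel {0..h} g"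
    and b: "\<And>x. x \<in> {0..h} \<Longrightarrow> norm (a x) \<le> g x"
  shows "okf h a"
  unfolding okf_def
proof
  show "(\<lambda>x. indicator {0..h} x *\<^sub>R a x) \<in> borel_measurable lborel" by (rule meas)
  have m2: "(\<lambda>x. indicator {0..h} x *\<^sub>R norm (a x)) \<in> borel_measurable lborel"
  proof -
    have "(\<lambda>x. norm (indicator {0..h} x *\<^sub>R a x)) \<in> borel_measurable lborel"
      using meas by measurable
    moreover have "(\<lambda>x. norm (indicator {0..h} x *\<^sub>R a x)) = (\<lambda>x. indicator {0..h} x *\<^sub>R norm (a x))"
      by (auto simp: fun_eq_iff indicator_def)
    ultimately show ?thesis by simp
  qed
  show "set_integrable lborel {0..h} (\<lambda>x. norm (a x))"
    unfolding set_integrable_def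
    apply (rule Bochner_Integration.integrable_bound[OF g[unfolded set_integrable_def] m2])
    using b by (auto simp: indicator_def intro!: AE_I2) (smt (verit) norm_ge_zero)
qed

lemma okf_L2: "L2_edge h f \<Longrightarrow> okf h f"
proof -
  assume L: "L2_edge h f"
  have i1: "set_integrable lborel {0..h} (\<lambda>x. 1::real)"
    unfolding set_integrable_def by (simp, rule integrable_real_indicator) (auto simp: emeasure_lborel_Icc_eq)
  have i2: "set_integrable lborel {0..h} (\<lambda>x. (norm (f x))\<^sup>2)" using L by (simp add: L2_edge_def)
  have "set_integrable lborel {0..h} (\<lambda>x. 1 + (norm (f x))\<^sup>2)"
    using set_integral_add(1)[OF i1 i2] .
  moreover have "norm (f x) \<le> 1 + (norm (f x))\<^sup>2" for x
    by (smt (verit) power2_eq_square mult_le_cancel_left1 norm_ge_zero zero_le_square)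
  ultimately show ?thesis using L by (intro okf_bound) (auto simp: L2_edge_def)
qed

lemma okf_int:
  assumes a: "okf h a" and b: "continuous_on UNIV b"
  shows "set_integrable lborel {0..h} (\<lambda>x. a x \<bullet> b x)"
proof -
  obtain M where M: "0 \<le> M" "\<And>x. x \<in> {0..h} \<Longrightarrow> norm (b x) \<le> M"
    using continuous_on_compact_bound[of "{0..h}" b] b continuous_on_subset by blast
  have ma: "(\<lambda>x. indicator {0..h} x *\<^sub>R a x) \<in> borel_measurable lborel" and
       ia: "set_integrable lborel {0..h} (\<lambda>x. norm (a x))" using a by (auto simp: okf_def)
  have mb: "b \<in> borel_measurable lborel"
    using borel_measurable_continuous_onI[OF b] by simp
  have meas: "(\<lambda>x. indicator {0..h} x *\<^sub>R (a x \<bullet> b x)) \<in> borel_measurable lborel"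
  proof -
    have "(\<lambda>x. (indicator {0..h} x *\<^sub>R a x) \<bullet> b x) \<in> borel_measurable lborel"
      by (rule borel_measurable_inner[OF ma mb])
    then show ?thesis by simp
  qed
  have ib: "integrable lborel (\<lambda>x. indicator {0..h} x *\<^sub>R (M * norm (a x)))"
    using set_integrable_mult_right[of M lborel "{0..h}" "\<lambda>x. norm (a x)"] ia
    by (simp add: set_integrable_def)
  show ?thesis
    unfolding set_integrable_def
  proof (rule Bochner_Integration.integrable_bound[OF ib meas], rule AE_I2)
    fix x
    show "norm (indicator {0..h} x *\<^sub>R (a x \<bullet> b x)) \<le> norm (indicator {0..h} x *\<^sub>R (M * norm (a x)))"
    proof (cases "x \<in> {0..h}")
      case True
      have "\<bar>a x \<bullet> b x\<bar> \<le> norm (a x) * norm (b x)" by (rule Cauchy_Schwarz_ineq2)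
      also have "\<dots> \<le> norm (a x) * M" using M(2)[OF True] by (simp add: mult_left_mono)
      finally show ?thesis using True M(1) by (simp add: mult.commute)
    qed simp
  qed
qed

lemma okf_int': "okf h a \<Longrightarrow> continuous_on UNIV b \<Longrightarrow> set_integrable lborel {0..h} (\<lambda>x. b x \<bullet> a x)"
  using okf_int[of h a b] by (simp add: inner_commute)

lemma l2_comb_left:
  assumes "set_integrable lborel {0..h} (\<lambda>x. a1 x \<bullet> b x)" "set_integrable lborel {0..h} (\<lambda>x. a2 x \<bullet> b x)"
  shows "l2_edge h (\<lambda>x. a1 x + c *\<^sub>R a2 x) b = l2_edge h a1 b + c * l2_edge h a2 b"
proof -
  have "l2_edge h (\<lambda>x. a1 x + c *\<^sub>R a2 x) b = (LINT x:{0..h}|lborel. a1 x \<bullet> b x + c * (a2 x \<bullet> b x))"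
    unfolding l2_edge_def by (simp add: inner_add_left)
  also have "\<dots> = (LINT x:{0..h}|lborel. a1 x \<bullet> b x) + (LINT x:{0..h}|lborel. c * (a2 x \<bullet> b x))"
    by (rule set_integral_add(2)[OF assms(1) set_integrable_mult_right]) (use assms(2) in simp)
  finally show ?thesis unfolding l2_edge_def by simp
qed

lemma l2_comb_right:
  assumes "set_integrable lborel {0..h} (\<lambda>x. a x \<bullet> b1 x)" "set_integrable lborel {0..h} (\<lambda>x. a x \<bullet> b2 x)"
  shows "l2_edge h a (\<lambda>x. b1 x + c *\<^sub>R b2 x) = l2_edge h a b1 + c * l2_edge h a b2"
proof -
  have "l2_edge h a (\<lambda>x. b1 x + c *\<^sub>R b2 x) = (LINT x:{0..h}|lborel. a x \<bullet> b1 x + c * (a x \<bullet> b2 x))"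
    unfolding l2_edge_def by (simp add: inner_add_right)
  also have "\<dots> = (LINT x:{0..h}|lborel. a x \<bullet> b1 x) + (LINT x:{0..h}|lborel. c * (a x \<bullet> b2 x))"
    by (rule set_integral_add(2)[OF assms(1) set_integrable_mult_right]) (use assms(2) in simp)
  finally show ?thesis unfolding l2_edge_def by simp
qed

lemma l2_zero_left[simp]: "l2_edge h (\<lambda>x. 0) b = 0"
  by (simp add: l2_edge_def)
lemma l2_zero_right[simp]: "l2_edge h a (\<lambda>x. 0) = 0"
  by (simp add: l2_edge_def)
lemma l2_commute: "l2_edge h a b = l2_edge h b a"
  by (simp add: l2_edge_def inner_commute)
lemma l2_neg_left: "l2_edge h (\<lambda>x. - a x) b = - l2_edge h a b"
  by (simp add: l2_edge_def set_lebesgue_integral_def)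

lemma coeff_inv:
  assumes ok: "coeff_ok h C \<alpha> \<beta>" and x: "x \<in> {0..h}"
  shows "C x *v (matrix_inv (C x) *v y) = y" and "det (C x) \<noteq> 0"
proof -
  have a: "0 < \<alpha>" and co: "\<And>\<xi>. \<alpha> * (norm \<xi>)\<^sup>2 \<le> (C x *v \<xi>) \<bullet> \<xi>" using ok x by (auto simp: coeff_ok_def)
  have "inj ((*v) (C x))"
  proof (rule injI)
    fix z1 z2 assume "C x *v z1 = C x *v z2"
    then have "C x *v (z1 - z2) = 0" by (simp add: matrix_vector_mult_diff_distrib)
    then have "\<alpha> * (norm (z1 - z2))\<^sup>2 \<le> 0" using co[of "z1 - z2"] by simp
    then have "norm (z1 - z2) = 0" using a by (smt (verit) mult_pos_pos power2_eq_square norm_ge_zero zero_less_norm_iff mult_nonneg_nonneg)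
    then show "z1 = z2" by simp
  qed
  then have d: "det (C x) \<noteq> 0"
    using det_nz_iff_inj[of "(*v) (C x)"] matrix_vector_mul_linear by (simp add: matrix_of_matrix_vector_mul)
  then show "det (C x) \<noteq> 0" .
  then have "invertible (C x)" by (simp add: invertible_det_nz)
  then obtain A' where "C x ** A' = mat 1 \<and> A' ** C x = mat 1" unfolding invertible_def by blast
  then have "C x ** matrix_inv (C x) = mat 1 \<and> matrix_inv (C x) ** C x = mat 1"
    unfolding matrix_inv_def by (rule someI)
  then show "C x *v (matrix_inv (C x) *v y) = y" by (simp add: matrix_vector_mul_assoc)
qed

lemma coeff_inv_bound:
  assumes ok: "coeff_ok h C \<alpha> \<beta>" and x: "x \<in> {0..h}"
  shows "norm (matrix_inv (C x) *v y) \<le> norm y / \<alpha>"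
proof -
  have a: "0 < \<alpha>" and co: "\<And>\<xi>. \<alpha> * (norm \<xi>)\<^sup>2 \<le> (C x *v \<xi>) \<bullet> \<xi>" using ok x by (auto simp: coeff_ok_def)
  define z where "z = matrix_inv (C x) *v y"
  have y: "C x *v z = y" unfolding z_def by (rule coeff_inv[OF ok x])
  have "\<alpha> * (norm z)\<^sup>2 \<le> y \<bullet> z" using co[of z] y by simp
  also have "\<dots> \<le> norm y * norm z" by (rule norm_cauchy_schwarz)
  finally have "\<alpha> * norm z * norm z \<le> norm y * norm z" by (simp add: power2_eq_square mult.assoc)
  then have "\<alpha> * norm z \<le> norm y"
    by (cases "norm z = 0") (auto simp: mult_le_cancel_right)
  then show ?thesis unfolding z_def[symmetric] using a by (simp add: field_simps)
qed

lemma coeff_inv_pos: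
  assumes ok: "coeff_ok h C \<alpha> \<beta>" and x: "x \<in> {0..h}"
  shows "\<alpha> * (norm (matrix_inv (C x) *v y))\<^sup>2 \<le> (matrix_inv (C x) *v y) \<bullet> y"
proof -
  have co: "\<And>\<xi>. \<alpha> * (norm \<xi>)\<^sup>2 \<le> (C x *v \<xi>) \<bullet> \<xi>" using ok x by (auto simp: coeff_ok_def)
  define z where "z = matrix_inv (C x) *v y"
  have y: "C x *v z = y" unfolding z_def by (rule coeff_inv[OF ok x])
  show ?thesis using co[of z] y unfolding z_def[symmetric] by (simp add: inner_commute)
qed

lemma det_measurable:
  assumes "\<And>i j. (\<lambda>x. A x $ i $ j) \<in> borel_measurable M"
  shows "(\<lambda>x. det (A x :: real^'n^'n)) \<in> borel_measurable M"
  unfolding det_def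
  apply (rule borel_measurable_sum)
  apply (rule borel_measurable_times)
   apply (rule borel_measurable_const)
  apply (rule borel_measurable_prod)
  apply (rule assms)
  done

lemma vec3_measurable:
  assumes "\<And>k. (\<lambda>x. f x $ k) \<in> borel_measurable M"
  shows "(f :: 'a \<Rightarrow> real^3) \<in> borel_measurable M"
proof -
  have e: "f = (\<lambda>x. \<Sum>k\<in>UNIV. f x $ k *\<^sub>R axis k (1::real))"
    by (simp add: fun_eq_iff vec_eq_iff axis_def if_distrib cong: if_cong)
  have "(\<lambda>x. \<Sum>k\<in>UNIV. f x $ k *\<^sub>R axis k (1::real)) \<in> borel_measurable M"
    apply (rule borel_measurable_sum)
    apply (rule borel_measurable_scaleR[OF assms borel_measurable_const])
    done
  then show ?thesis using e by simp
qed

lemma okf_Cinv: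
  assumes ok: "coeff_ok h C \<alpha> \<beta>" and n: "continuous_on UNIV n"
  shows "okf h (\<lambda>x. matrix_inv (C x) *v n x)"
proof (rule okf_bound)
  define C' where "C' x = (\<chi> i j. indicator {0..h} x * C x $ i $ j)" for x
  have mC: "(\<lambda>x. indicator {0..h} x * (C x $ i $ j)) \<in> borel_measurable lborel" for i j
    using ok by (simp add: coeff_ok_def)
  have mn: "(\<lambda>x. n x $ i) \<in> borel_measurable lborel" for i
    using borel_measurable_continuous_onI[of "\<lambda>x. n x $ i"] n
    by (simp add: continuous_on_component)
  let ?A = "\<lambda>k x. (\<chi> i j. if j = k then n x $ i else C' x $ i $ j) :: real^3^3"
  have mA: "(\<lambda>x. det (?A k x)) \<in> borel_measurable lborel" for k
  proof (rule det_measurable)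
    fix i j
    show "(\<lambda>x. ?A k x $ i $ j) \<in> borel_measurable lborel"
      using mC[of i j] mn[of i] by (cases "j = k") (simp_all add: C'_def)
  qed
  have mD: "(\<lambda>x. det (C' x)) \<in> borel_measurable lborel"
    by (rule det_measurable) (use mC in \<open>simp add: C'_def\<close>)
  have eq: "indicator {0..h} x *\<^sub>R (matrix_inv (C x) *v n x) =
        indicator {0..h} x *\<^sub>R (\<chi> k. det (?A k x) / det (C' x))" for x
  proof (cases "x \<in> {0..h}")
    case True
    then have C'x: "C' x = C x" by (simp add: C'_def vec_eq_iff)
    have "matrix_inv (C x) *v n x = (\<chi> k. det (\<chi> i j. if j = k then n x $ i else C x $ i $ j) / det (C x))"
      using cramer[OF coeff_inv(2)[OF ok True]] coeff_inv(1)[OF ok True] by blast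
    then show ?thesis unfolding C'x by simp
  qed simp
  show "(\<lambda>x. indicator {0..h} x *\<^sub>R (matrix_inv (C x) *v n x)) \<in> borel_measurable lborel"
    unfolding eq
  proof (intro borel_measurable_scaleR borel_measurable_indicator vec3_measurable)
    show "{0..h} \<in> sets lborel" by simp
    fix k
    show "(\<lambda>x. (\<chi> k. det (?A k x) / det (C' x)) $ k) \<in> borel_measurable lborel"
      unfolding vec_lambda_beta by (intro borel_measurable_divide mA mD)
  qed
  have "\<alpha> \<noteq> 0" using ok by (simp add: coeff_ok_def)
  then show "set_integrable lborel {0..h} (\<lambda>x. norm (n x) / \<alpha>)"
    by (intro borel_integrable_atLeastAtMost' continuous_intros continuous_on_subset[OF n]) auto
  show "norm (matrix_inv (C x) *v n x) \<le> norm (n x) / \<alpha>" if "x \<in> {0..h}" for x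
    by (rule coeff_inv_bound[OF ok that])
qed

lemma pderiv_sum': "pderiv (sum f S) = (\<Sum>i\<in>S. pderiv (f i))"
  by (induction S rule: infinite_finite_induct) (auto simp: pderiv_add pderiv_0)

lemma poly_FTC:
  fixes P :: "real poly"
  assumes "a \<le> b"
  shows "(LINT x:{a..b}|lborel. poly (pderiv P) x) = poly P b - poly P a"
  unfolding set_lebesgue_integral_def
  by (rule integral_FTC_atLeastAtMost[OF assms])
     (auto simp: has_real_derivative_iff_has_vector_derivative[symmetric] intro!: DERIV_subset[OF poly_DERIV] continuous_intros)

lemma AE_poly_zero:
  fixes R :: "real poly"
  assumes h: "h > 0" and ae: "AE x in lborel. x \<in> {0..h} \<longrightarrow> poly R x = 0"
  shows "R = 0"
proof (rule ccontr)
  assume "R \<noteq> 0"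
  then have fz: "finite {x. poly R x = 0}" by (rule poly_roots_finite)
  from ae obtain N where N: "{x \<in> space lborel. \<not> (x \<in> {0..h} \<longrightarrow> poly R x = 0)} \<subseteq> N"
    "emeasure lborel N = 0" "N \<in> sets lborel" by (rule AE_E)
  have sub: "{0..h} \<subseteq> N \<union> {x. poly R x = 0}" using N(1) by auto
  have Z: "emeasure lborel {x. poly R x = 0} = 0"
    using emeasure_lborel_countable countable_finite[OF fz] by blast
  have Zs: "{x. poly R x = 0} \<in> sets lborel" using borel_closed[OF finite_imp_closed[OF fz]] by simp
  have "emeasure lborel {0..h} \<le> emeasure lborel (N \<union> {x. poly R x = 0})"
    by (rule emeasure_mono[OF sub sets.Un[OF N(3) Zs]])
  also have "\<dots> \<le> emeasure lborel N + emeasure lborel {x. poly R x = 0}"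
    by (rule emeasure_subadditive[OF N(3) Zs])
  also have "\<dots> = 0" using N(2) Z by simp
  finally show False using h by simp
qed

lemma Vp_AE_zero:
  assumes v: "v \<in> Vp p" and h: "h > 0" and ae: "AE x in lborel. x \<in> {0..h} \<longrightarrow> v x = 0"
  shows "v = (\<lambda>x. 0)"
proof -
  obtain q where q: "\<And>i x. v x $ i = poly (q i) x" using VpE[OF v] by metis
  have "q i = 0" for i
    by (rule AE_poly_zero[OF h]) (rule AE_mp[OF ae], rule AE_I2, auto simp: q[symmetric])
  then show ?thesis by (simp add: fun_eq_iff vec_eq_iff q)
qed

lemma set_nonneg:
  fixes f :: "real \<Rightarrow> real"
  assumes "\<And>x. x \<in> {0..h} \<Longrightarrow> 0 \<le> f x"
  shows "0 \<le> (LINT x:{0..h}|lborel. f x)"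
  unfolding set_lebesgue_integral_def
  by (rule integral_nonneg_AE, rule AE_I2) (use assms in \<open>auto simp: indicator_def\<close>)

lemma set_zero_AE:
  assumes i: "set_integrable lborel {0..h} f" and nn: "\<And>x. x \<in> {0..h} \<Longrightarrow> 0 \<le> f x"
    and z: "(LINT x:{0..h}|lborel. f x) = 0"
  shows "AE x in lborel. x \<in> {0..h} \<longrightarrow> f x = (0::real)"
proof -
  have "AE x in lborel. indicator {0..h} x *\<^sub>R f x = 0"
    using integral_nonneg_eq_0_iff_AE[OF i[unfolded set_integrable_def], THEN iffD1] z nn
    unfolding set_lebesgue_integral_def by (auto simp: indicator_def intro!: AE_I2)
  then show ?thesis by (rule AE_mp) (auto intro!: AE_I2)
qed

lemma ibp_zero:
  assumes h: "h > 0" and w: "w \<in> Vp p" and w0: "w 0 = 0" and wh: "w h = 0"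
    and orth: "\<forall>q\<in>Vp p. l2_edge h w (dx q) = 0"
  shows "w = (\<lambda>x. 0)"
proof -
  obtain q where qd: "\<And>i. degree (q i) \<le> p" and q: "\<And>i x. w x $ i = poly (q i) x" using VpE[OF w] by metis
  have d1: "dx w = (\<lambda>x. \<chi> i. poly (pderiv (q i)) x)" by (rule Vp_dx[OF q])
  have d2: "dx (dx w) = (\<lambda>x. \<chi> i. poly (pderiv (pderiv (q i))) x)" by (rule Vp_dx) (simp add: d1)
  have "l2_edge h w (dx (dx w)) = 0" using orth Vp_dx_Vp[OF w] by blast
  then have I1: "(LINT x:{0..h}|lborel. (\<Sum>i\<in>UNIV. poly (q i) x * poly (pderiv (pderiv (q i))) x)) = 0"
    unfolding l2_edge_def d2 by (simp add: inner_vec_def q)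
  define P where "P = (\<Sum>i\<in>UNIV. q i * pderiv (q i))"
  have pP: "poly (pderiv P) x = (\<Sum>i\<in>UNIV. poly (q i) x * poly (pderiv (pderiv (q i))) x)
      + (\<Sum>i\<in>UNIV. poly (pderiv (q i)) x * poly (pderiv (q i)) x)" for x
    unfolding P_def by (simp add: pderiv_sum' pderiv_mult poly_sum sum.distrib algebra_simps)
  have P0: "poly P 0 = 0" and Ph: "poly P h = 0"
    using w0 wh by (auto simp: P_def poly_sum vec_eq_iff q[symmetric])
  have "(LINT x:{0..h}|lborel. poly (pderiv P) x) = 0"
    using poly_FTC[of 0 h P] h P0 Ph by simp
  moreover have "(LINT x:{0..h}|lborel. poly (pderiv P) x) =
     (LINT x:{0..h}|lborel. (\<Sum>i\<in>UNIV. poly (q i) x * poly (pderiv (pderiv (q i))) x))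
     + (LINT x:{0..h}|lborel. (\<Sum>i\<in>UNIV. poly (pderiv (q i)) x * poly (pderiv (q i)) x))"
    unfolding pP
    by (rule set_integral_add(2)) (auto intro!: borel_integrable_atLeastAtMost' continuous_intros)
  ultimately have I2: "(LINT x:{0..h}|lborel. (\<Sum>i\<in>UNIV. poly (pderiv (q i)) x * poly (pderiv (q i)) x)) = 0"
    using I1 by simp
  have "AE x in lborel. x \<in> {0..h} \<longrightarrow> (\<Sum>i\<in>UNIV. poly (pderiv (q i)) x * poly (pderiv (q i)) x) = 0"
    by (rule set_zero_AE[OF _ _ I2]) (auto intro!: borel_integrable_atLeastAtMost' continuous_intros sum_nonneg)
  then have "(\<Sum>i\<in>UNIV. pderiv (q i) * pderiv (q i)) = 0"
    by (intro AE_poly_zero[OF h]) (simp add: poly_sum)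
  then have "\<forall>x. poly (\<Sum>i\<in>UNIV. pderiv (q i) * pderiv (q i)) x = 0" by simp
  then have "\<forall>x. \<forall>i\<in>UNIV. poly (pderiv (q i)) x * poly (pderiv (q i)) x = 0"
    by (subst (asm) poly_sum) (simp add: poly_sum sum_nonneg_eq_0_iff)
  then have "pderiv (q i) = 0" for i
    using poly_all_0_iff_0[of "pderiv (q i)"] by simp
  then have "degree (q i) = 0" for i by (simp add: pderiv_eq_0_iff)
  then have "poly (q i) x = poly (q i) 0" for i x by (simp add: poly_altdef)
  then show ?thesis using w0 by (simp add: fun_eq_iff vec_eq_iff q)
qed

lemma Cinv_zero:
  assumes ok: "coeff_ok h C \<alpha> \<beta>" and h: "h > 0" and n: "n \<in> Vp p"
  shows "0 \<le> l2_edge h (\<lambda>x. matrix_inv (C x) *v n x) n"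
    and "l2_edge h (\<lambda>x. matrix_inv (C x) *v n x) n = 0 \<Longrightarrow> n = (\<lambda>x. 0)"
proof -
  have a: "0 < \<alpha>" using ok by (simp add: coeff_ok_def)
  have nn: "0 \<le> (matrix_inv (C x) *v n x) \<bullet> n x" if "x \<in> {0..h}" for x
    using coeff_inv_pos[OF ok that, of "n x"] a by (smt (verit) mult_nonneg_nonneg zero_le_power2 less_imp_le)
  show "0 \<le> l2_edge h (\<lambda>x. matrix_inv (C x) *v n x) n"
    unfolding l2_edge_def by (rule set_nonneg) (rule nn)
  assume z: "l2_edge h (\<lambda>x. matrix_inv (C x) *v n x) n = 0"
  have "AE x in lborel. x \<in> {0..h} \<longrightarrow> (matrix_inv (C x) *v n x) \<bullet> n x = 0"
    by (rule set_zero_AE[OF okf_int[OF okf_Cinv[OF ok Vp_cont[OF n]] Vp_cont[OF n]] nn z[unfolded l2_edge_def]])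
  then have "AE x in lborel. x \<in> {0..h} \<longrightarrow> n x = 0"
  proof (rule AE_mp, intro AE_I2 impI)
    fix x assume x: "x \<in> {0..h}" and "x \<in> {0..h} \<longrightarrow> (matrix_inv (C x) *v n x) \<bullet> n x = 0"
    then have "\<alpha> * (norm (matrix_inv (C x) *v n x))\<^sup>2 \<le> 0" using coeff_inv_pos[OF ok x, of "n x"] by simp
    then have "matrix_inv (C x) *v n x = 0" using a
      by (smt (verit) mult_pos_pos zero_less_power2 zero_less_norm_iff)
    then show "n x = 0" using coeff_inv(1)[OF ok x, of "n x"] by simp
  qed
  then show "n = (\<lambda>x. 0)" by (rule Vp_AE_zero[OF n h])
qed

lemma sum_fun_apply': "(sum f S) x = (\<Sum>i\<in>S. f i x)"
  by (induction S rule: infinite_finite_induct) auto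

definition E1 :: "nat \<Rightarrow> (real \<Rightarrow> real^3) set" where
  "E1 p = (\<lambda>(k, i). (\<lambda>x. (x ^ k) *\<^sub>R axis i (1::real))) ` ({..p} \<times> UNIV)"

lemma finite_E1: "finite (E1 p)"
  unfolding E1_def by simp

lemma poly_upto:
  fixes Q :: "real poly"
  assumes "degree Q \<le> p"
  shows "poly Q x = (\<Sum>k\<le>p. coeff Q k * x ^ k)"
proof -
  have "poly Q x = (\<Sum>k\<le>degree Q. coeff Q k * x ^ k)" by (rule poly_altdef)
  also have "\<dots> = (\<Sum>k\<le>p. coeff Q k * x ^ k)"
    by (rule sum.mono_neutral_left) (use assms in \<open>auto simp: coeff_eq_0\<close>)
  finally show ?thesis .
qed

lemma Vp_span: "Vp p \<subseteq> span (E1 p)"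
proof
  fix v assume v: "v \<in> Vp p"
  obtain q where qd: "\<And>i. degree (q i) \<le> p" and q: "\<And>i x. v x $ i = poly (q i) x" using VpE[OF v] by metis
  let ?e = "\<lambda>(k, i). (\<lambda>x. (x ^ k) *\<^sub>R axis i (1::real))"
  have "v = (\<Sum>ki\<in>{..p} \<times> UNIV. coeff (q (snd ki)) (fst ki) *\<^sub>R ?e ki)"
  proof (rule ext)
    fix x
    have "(\<Sum>ki\<in>{..p} \<times> UNIV. coeff (q (snd ki)) (fst ki) *\<^sub>R ?e ki) x
        = (\<Sum>ki\<in>{..p} \<times> UNIV. (coeff (q (snd ki)) (fst ki) * x ^ fst ki) *\<^sub>R axis (snd ki) (1::real))"
      by (simp add: sum_fun_apply' case_prod_beta)
    also have "\<dots> = (\<Sum>k\<le>p. \<Sum>i\<in>UNIV. (coeff (q i) k * x ^ k) *\<^sub>R axis i (1::real))"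
      by (simp add: sum.cartesian_product case_prod_beta)
    also have "\<dots> = (\<Sum>i\<in>UNIV. (\<Sum>k\<le>p. coeff (q i) k * x ^ k) *\<^sub>R axis i (1::real))"
      by (subst sum.swap) (simp add: scaleR_sum_left)
    also have "\<dots> = (\<Sum>i\<in>UNIV. poly (q i) x *\<^sub>R axis i (1::real))"
      by (simp add: poly_upto[OF qd])
    also have "\<dots> = v x"
      by (simp add: vec_eq_iff axis_def q if_distrib cong: if_cong)
    finally show "v x = (\<Sum>ki\<in>{..p} \<times> UNIV. coeff (q (snd ki)) (fst ki) *\<^sub>R ?e ki) x" by simp
  qed
  also have "\<dots> \<in> span (E1 p)"
    by (intro span_sum span_scale span_base) (auto simp: E1_def)
  finally show "v \<in> span (E1 p)" .
qed

definition VV :: "nat \<Rightarrow> ((real \<Rightarrow> real^3) \<times> (real \<Rightarrow> real^3) \<times> (real \<Rightarrow> real^3) \<times> (real \<Rightarrow> real^3)) set" where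
  "VV p = Vp p \<times> Vp p \<times> Vp p \<times> Vp p"

lemma Vp_0: "(0::real \<Rightarrow> real^3) \<in> Vp p"
  using Vp_zero by (simp add: zero_fun_def)

lemma Vp_add: "u \<in> Vp p \<Longrightarrow> v \<in> Vp p \<Longrightarrow> u + v \<in> Vp p"
  using Vp_comb'[of u p v 1] by simp

lemma Vp_scale: "v \<in> Vp p \<Longrightarrow> c *\<^sub>R v \<in> Vp p"
  using Vp_comb'[OF Vp_0 _, of v p c] by simp

lemma subspace_VV: "subspace (VV p)"
  unfolding subspace_def VV_def
  by (auto simp: zero_prod_def Vp_0 Vp_add Vp_scale)

lemma span_emb:
  assumes "linear F" "v \<in> span S"
  shows "F v \<in> span (F ` S)"
  using assms span_linear_image by blast

definition E4 :: "nat \<Rightarrow> ((real \<Rightarrow> real^3) \<times> (real \<Rightarrow> real^3) \<times> (real \<Rightarrow> real^3) \<times> (real \<Rightarrow> real^3)) set" where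
  "E4 p = (\<lambda>e. (e, 0, 0, 0)) ` E1 p \<union> (\<lambda>e. (0, e, 0, 0)) ` E1 p \<union> (\<lambda>e. (0, 0, e, 0)) ` E1 p \<union> (\<lambda>e. (0, 0, 0, e)) ` E1 p"

lemma finite_E4: "finite (E4 p)"
  unfolding E4_def using finite_E1 by simp

lemma VV_span: "VV p \<subseteq> span (E4 p)"
proof
  fix U assume "U \<in> VV p"
  then obtain u r n m where U: "U = (u, r, n, m)" and V: "u \<in> Vp p" "r \<in> Vp p" "n \<in> Vp p" "m \<in> Vp p"
    unfolding VV_def by auto
  have l1: "linear (\<lambda>e::real \<Rightarrow> real^3. (e, (0::real \<Rightarrow> real^3), (0::real \<Rightarrow> real^3), (0::real \<Rightarrow> real^3)))"
    by (rule linearI) (auto simp: zero_prod_def)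
  have l2: "linear (\<lambda>e::real \<Rightarrow> real^3. ((0::real \<Rightarrow> real^3), e, (0::real \<Rightarrow> real^3), (0::real \<Rightarrow> real^3)))"
    by (rule linearI) (auto simp: zero_prod_def)
  have l3: "linear (\<lambda>e::real \<Rightarrow> real^3. ((0::real \<Rightarrow> real^3), (0::real \<Rightarrow> real^3), e, (0::real \<Rightarrow> real^3)))"
    by (rule linearI) (auto simp: zero_prod_def)
  have l4: "linear (\<lambda>e::real \<Rightarrow> real^3. ((0::real \<Rightarrow> real^3), (0::real \<Rightarrow> real^3), (0::real \<Rightarrow> real^3), e))"
    by (rule linearI) (auto simp: zero_prod_def)
  have s1: "(u, 0, 0, 0) \<in> span (E4 p)"
    using span_emb[OF l1 subsetD[OF Vp_span V(1)]] span_mono[of _ "E4 p"] unfolding E4_def by blast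
  have s2: "(0, r, 0, 0) \<in> span (E4 p)"
    using span_emb[OF l2 subsetD[OF Vp_span V(2)]] span_mono[of _ "E4 p"] unfolding E4_def by blast
  have s3: "(0, 0, n, 0) \<in> span (E4 p)"
    using span_emb[OF l3 subsetD[OF Vp_span V(3)]] span_mono[of _ "E4 p"] unfolding E4_def by blast
  have s4: "(0, 0, 0, m) \<in> span (E4 p)"
    using span_emb[OF l4 subsetD[OF Vp_span V(4)]] span_mono[of _ "E4 p"] unfolding E4_def by blast
  have "U = (u, 0, 0, 0) + (0, r, 0, 0) + (0, 0, n, 0) + (0, 0, 0, m)"
    by (simp add: U)
  moreover have "(u, 0, 0, 0) + (0, r, 0, 0) + (0, 0, n, 0) + (0, 0, 0, m) \<in> span (E4 p)"
    by (intro span_add s1 s2 s3 s4)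
  ultimately show "U \<in> span (E4 p)" by simp
qed

lemma lin_left:
  assumes "okf h a1" "okf h a2" "b \<in> Vp p"
  shows "l2_edge h (a1 + c *\<^sub>R a2) b = l2_edge h a1 b + c * l2_edge h a2 b"
  unfolding plus_fun_def scaleR_fun_def
  by (rule l2_comb_left; rule okf_int; (rule assms | rule Vp_cont[OF assms(3)]))

lemma lin_right:
  assumes "okf h a" "b1 \<in> Vp p" "b2 \<in> Vp p"
  shows "l2_edge h a (b1 + c *\<^sub>R b2) = l2_edge h a b1 + c * l2_edge h a b2"
  unfolding plus_fun_def scaleR_fun_def
  by (rule l2_comb_right; rule okf_int; (rule assms | rule Vp_cont[OF assms(2)] | rule Vp_cont[OF assms(3)]))

lemma cinv_fun:
  fixes C :: "real \<Rightarrow> real^3^3" and n1 n2 :: "real \<Rightarrow> real^3"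
  shows "(\<lambda>x. matrix_inv (C x) *v (n1 + c *\<^sub>R n2) x) =
   (\<lambda>x. matrix_inv (C x) *v n1 x) + c *\<^sub>R (\<lambda>x. matrix_inv (C x) *v n2 x)"
  by (simp add: fun_eq_iff matrix_vector_right_distrib matrix_vector_mult_scaleR)

lemma cross_fun: "(\<lambda>x. cross3 a ((r1 + c *\<^sub>R r2) x)) = (\<lambda>x. cross3 a (r1 x)) + c *\<^sub>R (\<lambda>x. cross3 a (r2 x))"
  by (simp add: fun_eq_iff cross_add_right cross_mult_right)

lemma dx_fun: "u \<in> Vp p \<Longrightarrow> v \<in> Vp p \<Longrightarrow> dx (u + c *\<^sub>R v) = dx u + c *\<^sub>R dx v"
  using dx_comb[of u p v c] unfolding plus_fun_def scaleR_fun_def .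

lemma bdry_left: "bdry_edge h (u1 + c *\<^sub>R u2) v = bdry_edge h u1 v + c * bdry_edge h u2 v"
  by (simp add: bdry_edge_def inner_add_left algebra_simps)
lemma bdry_right: "bdry_edge h u (v1 + c *\<^sub>R v2) = bdry_edge h u v1 + c * bdry_edge h u v2"
  by (simp add: bdry_edge_def inner_add_right algebra_simps)

lemma okf_cross: "v \<in> Vp p \<Longrightarrow> okf h (\<lambda>x. cross3 a (v x))"
  by (rule okf_cont) (intro continuous_on_cross continuous_on_const Vp_cont)

locale sys =
  fixes h :: real and ie :: "real^3" and \<tau> :: real and Cn Cm :: "real \<Rightarrow> real^3^3"
    and \<alpha>n \<beta>n \<alpha>m \<beta>m :: real and p :: nat
    and uk ul rk rl :: "real^3" and f g :: "real \<Rightarrow> real^3"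
  assumes hpos: "h > 0" and tpos: "\<tau> > 0" and okn: "coeff_ok h Cn \<alpha>n \<beta>n" and okm: "coeff_ok h Cm \<alpha>m \<beta>m"
    and Lf: "L2_edge h f" and Lg: "L2_edge h g"
begin

definition BB' where "BB' u r n m pp q v w =
   (- l2_edge h (\<lambda>x. matrix_inv (Cn x) *v n x) pp + l2_edge h u (dx pp) - l2_edge h (\<lambda>x. cross3 ie (r x)) pp)
 + (- l2_edge h (\<lambda>x. matrix_inv (Cm x) *v m x) q + l2_edge h r (dx q))
 + (l2_edge h (dx n) v + \<tau> * bdry_edge h u v)
 + (l2_edge h (\<lambda>x. cross3 ie (n x)) w + l2_edge h (dx m) w + \<tau> * bdry_edge h r w)"

definition BB where "BB U T = (case U of (u, r, n, m) \<Rightarrow> case T of (pp, q, v, w) \<Rightarrow> BB' u r n m pp q v w)"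

definition LL' where "LL' pp q v w =
   (- (uk \<bullet> pp 0) + ul \<bullet> pp h) + (- (rk \<bullet> q 0) + rl \<bullet> q h)
 + (l2_edge h f v + \<tau> * (uk \<bullet> v 0 + ul \<bullet> v h)) + (l2_edge h g w + \<tau> * (rk \<bullet> w 0 + rl \<bullet> w h))"

definition LL where "LL T = (case T of (pp, q, v, w) \<Rightarrow> LL' pp q v w)"

lemma BB_left:
  assumes "U1 \<in> VV p" "U2 \<in> VV p" "T \<in> VV p"
  shows "BB (U1 + c *\<^sub>R U2) T = BB U1 T + c * BB U2 T"
proof -
  obtain u1 r1 n1 m1 where U1: "U1 = (u1, r1, n1, m1)" and V1: "u1 \<in> Vp p" "r1 \<in> Vp p" "n1 \<in> Vp p" "m1 \<in> Vp p"
    using assms(1) unfolding VV_def by auto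
  obtain u2 r2 n2 m2 where U2: "U2 = (u2, r2, n2, m2)" and V2: "u2 \<in> Vp p" "r2 \<in> Vp p" "n2 \<in> Vp p" "m2 \<in> Vp p"
    using assms(2) unfolding VV_def by auto
  obtain pp q v w where T: "T = (pp, q, v, w)" and VT: "pp \<in> Vp p" "q \<in> Vp p" "v \<in> Vp p" "w \<in> Vp p"
    using assms(3) unfolding VV_def by auto
  have s: "BB (U1 + c *\<^sub>R U2) T = BB' (u1 + c *\<^sub>R u2) (r1 + c *\<^sub>R r2) (n1 + c *\<^sub>R n2) (m1 + c *\<^sub>R m2) pp q v w"
    by (simp add: BB_def U1 U2 T)
  have e1: "l2_edge h (\<lambda>x. matrix_inv (Cn x) *v (n1 + c *\<^sub>R n2) x) pp =
      l2_edge h (\<lambda>x. matrix_inv (Cn x) *v n1 x) pp + c * l2_edge h (\<lambda>x. matrix_inv (Cn x) *v n2 x) pp"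
    unfolding cinv_fun by (rule lin_left[OF okf_Cinv[OF okn Vp_cont[OF V1(3)]] okf_Cinv[OF okn Vp_cont[OF V2(3)]] VT(1)])
  have e2: "l2_edge h (u1 + c *\<^sub>R u2) (dx pp) = l2_edge h u1 (dx pp) + c * l2_edge h u2 (dx pp)"
    by (rule lin_left[OF okf_Vp[OF V1(1)] okf_Vp[OF V2(1)] Vp_dx_Vp[OF VT(1)]])
  have e3: "l2_edge h (\<lambda>x. cross3 ie ((r1 + c *\<^sub>R r2) x)) pp =
      l2_edge h (\<lambda>x. cross3 ie (r1 x)) pp + c * l2_edge h (\<lambda>x. cross3 ie (r2 x)) pp"
    unfolding cross_fun by (rule lin_left[OF okf_cross[OF V1(2)] okf_cross[OF V2(2)] VT(1)])
  have e4: "l2_edge h (\<lambda>x. matrix_inv (Cm x) *v (m1 + c *\<^sub>R m2) x) q =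
      l2_edge h (\<lambda>x. matrix_inv (Cm x) *v m1 x) q + c * l2_edge h (\<lambda>x. matrix_inv (Cm x) *v m2 x) q"
    unfolding cinv_fun by (rule lin_left[OF okf_Cinv[OF okm Vp_cont[OF V1(4)]] okf_Cinv[OF okm Vp_cont[OF V2(4)]] VT(2)])
  have e5: "l2_edge h (r1 + c *\<^sub>R r2) (dx q) = l2_edge h r1 (dx q) + c * l2_edge h r2 (dx q)"
    by (rule lin_left[OF okf_Vp[OF V1(2)] okf_Vp[OF V2(2)] Vp_dx_Vp[OF VT(2)]])
  have e6: "l2_edge h (dx (n1 + c *\<^sub>R n2)) v = l2_edge h (dx n1) v + c * l2_edge h (dx n2) v"
    unfolding dx_fun[OF V1(3) V2(3)]
    by (rule lin_left[OF okf_Vp[OF Vp_dx_Vp[OF V1(3)]] okf_Vp[OF Vp_dx_Vp[OF V2(3)]] VT(3)])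
  have e8: "l2_edge h (\<lambda>x. cross3 ie ((n1 + c *\<^sub>R n2) x)) w =
      l2_edge h (\<lambda>x. cross3 ie (n1 x)) w + c * l2_edge h (\<lambda>x. cross3 ie (n2 x)) w"
    unfolding cross_fun by (rule lin_left[OF okf_cross[OF V1(3)] okf_cross[OF V2(3)] VT(4)])
  have e9: "l2_edge h (dx (m1 + c *\<^sub>R m2)) w = l2_edge h (dx m1) w + c * l2_edge h (dx m2) w"
    unfolding dx_fun[OF V1(4) V2(4)]
    by (rule lin_left[OF okf_Vp[OF Vp_dx_Vp[OF V1(4)]] okf_Vp[OF Vp_dx_Vp[OF V2(4)]] VT(4)])
  show ?thesis
    unfolding s unfolding BB'_def e1 e2 e3 e4 e5 e6 e8 e9 bdry_left
    by (simp add: BB_def BB'_def U1 U2 T algebra_simps)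
qed

lemma BB_right:
  assumes "T1 \<in> VV p" "T2 \<in> VV p" "U \<in> VV p"
  shows "BB U (T1 + c *\<^sub>R T2) = BB U T1 + c * BB U T2"
proof -
  obtain u r n m where U: "U = (u, r, n, m)" and V: "u \<in> Vp p" "r \<in> Vp p" "n \<in> Vp p" "m \<in> Vp p"
    using assms(3) unfolding VV_def by auto
  obtain pp1 q1 v1 w1 where T1: "T1 = (pp1, q1, v1, w1)" and V1: "pp1 \<in> Vp p" "q1 \<in> Vp p" "v1 \<in> Vp p" "w1 \<in> Vp p"
    using assms(1) unfolding VV_def by auto
  obtain pp2 q2 v2 w2 where T2: "T2 = (pp2, q2, v2, w2)" and V2: "pp2 \<in> Vp p" "q2 \<in> Vp p" "v2 \<in> Vp p" "w2 \<in> Vp p"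
    using assms(2) unfolding VV_def by auto
  have s: "BB U (T1 + c *\<^sub>R T2) = BB' u r n m (pp1 + c *\<^sub>R pp2) (q1 + c *\<^sub>R q2) (v1 + c *\<^sub>R v2) (w1 + c *\<^sub>R w2)"
    by (simp add: BB_def U T1 T2)
  have e1: "l2_edge h (\<lambda>x. matrix_inv (Cn x) *v n x) (pp1 + c *\<^sub>R pp2) =
      l2_edge h (\<lambda>x. matrix_inv (Cn x) *v n x) pp1 + c * l2_edge h (\<lambda>x. matrix_inv (Cn x) *v n x) pp2"
    by (rule lin_right[OF okf_Cinv[OF okn Vp_cont[OF V(3)]] V1(1) V2(1)])
  have e2: "l2_edge h u (dx (pp1 + c *\<^sub>R pp2)) = l2_edge h u (dx pp1) + c * l2_edge h u (dx pp2)"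
    unfolding dx_fun[OF V1(1) V2(1)] by (rule lin_right[OF okf_Vp[OF V(1)] Vp_dx_Vp[OF V1(1)] Vp_dx_Vp[OF V2(1)]])
  have e3: "l2_edge h (\<lambda>x. cross3 ie (r x)) (pp1 + c *\<^sub>R pp2) =
      l2_edge h (\<lambda>x. cross3 ie (r x)) pp1 + c * l2_edge h (\<lambda>x. cross3 ie (r x)) pp2"
    by (rule lin_right[OF okf_cross[OF V(2)] V1(1) V2(1)])
  have e4: "l2_edge h (\<lambda>x. matrix_inv (Cm x) *v m x) (q1 + c *\<^sub>R q2) =
      l2_edge h (\<lambda>x. matrix_inv (Cm x) *v m x) q1 + c * l2_edge h (\<lambda>x. matrix_inv (Cm x) *v m x) q2"
    by (rule lin_right[OF okf_Cinv[OF okm Vp_cont[OF V(4)]] V1(2) V2(2)])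
  have e5: "l2_edge h r (dx (q1 + c *\<^sub>R q2)) = l2_edge h r (dx q1) + c * l2_edge h r (dx q2)"
    unfolding dx_fun[OF V1(2) V2(2)] by (rule lin_right[OF okf_Vp[OF V(2)] Vp_dx_Vp[OF V1(2)] Vp_dx_Vp[OF V2(2)]])
  have e6: "l2_edge h (dx n) (v1 + c *\<^sub>R v2) = l2_edge h (dx n) v1 + c * l2_edge h (dx n) v2"
    by (rule lin_right[OF okf_Vp[OF Vp_dx_Vp[OF V(3)]] V1(3) V2(3)])
  have e8: "l2_edge h (\<lambda>x. cross3 ie (n x)) (w1 + c *\<^sub>R w2) =
      l2_edge h (\<lambda>x. cross3 ie (n x)) w1 + c * l2_edge h (\<lambda>x. cross3 ie (n x)) w2"
    by (rule lin_right[OF okf_cross[OF V(3)] V1(4) V2(4)])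
  have e9: "l2_edge h (dx m) (w1 + c *\<^sub>R w2) = l2_edge h (dx m) w1 + c * l2_edge h (dx m) w2"
    by (rule lin_right[OF okf_Vp[OF Vp_dx_Vp[OF V(4)]] V1(4) V2(4)])
  show ?thesis
    unfolding s unfolding BB'_def e1 e2 e3 e4 e5 e6 e8 e9 bdry_right
    by (simp add: BB_def BB'_def U T1 T2 algebra_simps)
qed

lemma LL_lin:
  assumes "T1 \<in> VV p" "T2 \<in> VV p"
  shows "LL (T1 + c *\<^sub>R T2) = LL T1 + c * LL T2"
proof -
  obtain pp1 q1 v1 w1 where T1: "T1 = (pp1, q1, v1, w1)" and V1: "pp1 \<in> Vp p" "q1 \<in> Vp p" "v1 \<in> Vp p" "w1 \<in> Vp p"
    using assms(1) unfolding VV_def by auto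
  obtain pp2 q2 v2 w2 where T2: "T2 = (pp2, q2, v2, w2)" and V2: "pp2 \<in> Vp p" "q2 \<in> Vp p" "v2 \<in> Vp p" "w2 \<in> Vp p"
    using assms(2) unfolding VV_def by auto
  have s: "LL (T1 + c *\<^sub>R T2) = LL' (pp1 + c *\<^sub>R pp2) (q1 + c *\<^sub>R q2) (v1 + c *\<^sub>R v2) (w1 + c *\<^sub>R w2)"
    by (simp add: LL_def T1 T2)
  have e1: "l2_edge h f (v1 + c *\<^sub>R v2) = l2_edge h f v1 + c * l2_edge h f v2"
    by (rule lin_right[OF okf_L2[OF Lf] V1(3) V2(3)])
  have e2: "l2_edge h g (w1 + c *\<^sub>R w2) = l2_edge h g w1 + c * l2_edge h g w2"
    by (rule lin_right[OF okf_L2[OF Lg] V1(4) V2(4)])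
  show ?thesis
    unfolding s unfolding LL'_def e1 e2
    by (simp add: LL_def LL'_def T1 T2 algebra_simps inner_add_right)
qed

end

lemma cross_swap: "cross3 a b \<bullet> c = - (cross3 a c \<bullet> b)"
  by (simp add: cross3_simps)

context sys
begin

lemma l2_cross_swap: "l2_edge h (\<lambda>x. cross3 ie (r x)) n = - l2_edge h (\<lambda>x. cross3 ie (n x)) r"
proof -
  have "l2_edge h (\<lambda>x. cross3 ie (r x)) n = (LINT x:{0..h}|lborel. - (cross3 ie (n x) \<bullet> r x))"
  proof -
    have pw: "\<And>x. cross3 ie (r x) \<bullet> n x = - (cross3 ie (n x) \<bullet> r x)" by (rule cross_swap)
    show ?thesis unfolding l2_edge_def pw ..
  qed
  also have "\<dots> = - l2_edge h (\<lambda>x. cross3 ie (n x)) r"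
    by (simp add: l2_edge_def set_lebesgue_integral_def)
  finally show ?thesis .
qed

lemma BB_inj:
  assumes U: "U \<in> VV p" and z: "\<forall>T\<in>VV p. BB U T = 0"
  shows "U = 0"
proof -
  obtain u r n m where Ue: "U = (u, r, n, m)" and V: "u \<in> Vp p" "r \<in> Vp p" "n \<in> Vp p" "m \<in> Vp p"
    using U unfolding VV_def by auto
  define Z where "Z = (\<lambda>x::real. 0::real^3)"
  have Z: "Z \<in> Vp p" unfolding Z_def by (rule Vp_zero)
  have dZ: "dx Z = Z" unfolding Z_def by (rule dx_zero)
  have T: "(a, b, c, d) \<in> VV p" if "a \<in> Vp p" "b \<in> Vp p" "c \<in> Vp p" "d \<in> Vp p" for a b c d
    using that by (simp add: VV_def)
  have bz: "bdry_edge h a Z = 0" for a by (simp add: bdry_edge_def Z_def)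
  have lz: "l2_edge h a Z = 0" for a by (simp add: Z_def)
  have B: "BB' u r n m a b c d = 0" if "a \<in> Vp p" "b \<in> Vp p" "c \<in> Vp p" "d \<in> Vp p" for a b c d
    using z[rule_format, OF T[OF that]] by (simp add: Ue BB_def)
  have Z1: "- l2_edge h (\<lambda>x. matrix_inv (Cn x) *v n x) n + l2_edge h u (dx n) - l2_edge h (\<lambda>x. cross3 ie (r x)) n = 0"
    using B[OF V(3) Z Z Z] by (simp add: BB'_def dZ bz lz)
  have Z2: "- l2_edge h (\<lambda>x. matrix_inv (Cm x) *v m x) m + l2_edge h r (dx m) = 0"
    using B[OF Z V(4) Z Z] by (simp add: BB'_def dZ bz lz)
  have Z3: "l2_edge h (dx n) u + \<tau> * bdry_edge h u u = 0"
    using B[OF Z Z V(1) Z] by (simp add: BB'_def dZ bz lz)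
  have Z4: "l2_edge h (\<lambda>x. cross3 ie (n x)) r + l2_edge h (dx m) r + \<tau> * bdry_edge h r r = 0"
    using B[OF Z Z Z V(2)] by (simp add: BB'_def dZ bz lz)
  have c1: "l2_edge h u (dx n) = l2_edge h (dx n) u" by (rule l2_commute)
  have c2: "l2_edge h r (dx m) = l2_edge h (dx m) r" by (rule l2_commute)
  have c3: "l2_edge h (\<lambda>x. cross3 ie (r x)) n = - l2_edge h (\<lambda>x. cross3 ie (n x)) r" by (rule l2_cross_swap)
  have A0: "0 \<le> l2_edge h (\<lambda>x. matrix_inv (Cn x) *v n x) n" by (rule Cinv_zero(1)[OF okn hpos V(3)])
  have B0: "0 \<le> l2_edge h (\<lambda>x. matrix_inv (Cm x) *v m x) m" by (rule Cinv_zero(1)[OF okm hpos V(4)])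
  have bu: "0 \<le> bdry_edge h u u" and br: "0 \<le> bdry_edge h r r" by (simp_all add: bdry_edge_def)
  have tu: "0 \<le> \<tau> * bdry_edge h u u" and tr: "0 \<le> \<tau> * bdry_edge h r r"
    using bu br tpos by simp_all
  have sum: "l2_edge h (\<lambda>x. matrix_inv (Cn x) *v n x) n + l2_edge h (\<lambda>x. matrix_inv (Cm x) *v m x) m
      + \<tau> * bdry_edge h u u + \<tau> * bdry_edge h r r = 0"
    using Z1 Z2 Z3 Z4 c1 c2 c3 by linarith
  have An: "l2_edge h (\<lambda>x. matrix_inv (Cn x) *v n x) n = 0" using sum A0 B0 tu tr by linarith
  have Am: "l2_edge h (\<lambda>x. matrix_inv (Cm x) *v m x) m = 0" using sum A0 B0 tu tr by linarith
  have "\<tau> * bdry_edge h u u = 0" using sum A0 B0 tu tr by linarith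
  then have "bdry_edge h u u = 0" using tpos by simp
  then have u0: "u 0 = 0" and uh: "u h = 0"
    by (simp_all add: bdry_edge_def add_nonneg_eq_0_iff)
  have "\<tau> * bdry_edge h r r = 0" using sum A0 B0 tu tr by linarith
  then have "bdry_edge h r r = 0" using tpos by simp
  then have r0: "r 0 = 0" and rh: "r h = 0"
    by (simp_all add: bdry_edge_def add_nonneg_eq_0_iff)
  have n0: "n = Z" unfolding Z_def by (rule Cinv_zero(2)[OF okn hpos V(3) An])
  have m0: "m = Z" unfolding Z_def by (rule Cinv_zero(2)[OF okm hpos V(4) Am])
  have "\<forall>q\<in>Vp p. l2_edge h r (dx q) = 0"
  proof
    fix q assume q: "q \<in> Vp p"
    show "l2_edge h r (dx q) = 0"
      using B[OF Z q Z Z] by (simp add: BB'_def dZ bz lz m0 n0) (simp add: Z_def)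
  qed
  then have rz: "r = Z" unfolding Z_def by (rule ibp_zero[OF hpos V(2) r0 rh])
  have "\<forall>q\<in>Vp p. l2_edge h u (dx q) = 0"
  proof
    fix q assume q: "q \<in> Vp p"
    show "l2_edge h u (dx q) = 0"
      using B[OF q Z Z Z] by (simp add: BB'_def dZ bz lz m0 n0 rz) (simp add: Z_def)
  qed
  then have uz: "u = Z" unfolding Z_def by (rule ibp_zero[OF hpos V(1) u0 uh])
  show "U = 0" by (simp add: Ue uz rz n0 m0 Z_def zero_prod_def zero_fun_def)
qed

lemma exists_sol: "\<exists>U\<in>VV p. \<forall>T\<in>VV p. BB U T = LL T"
proof (rule square_system[OF subspace_VV finite_E4 VV_span])
  show "BB (x + c *\<^sub>R y) z = BB x z + c * BB y z" if "x \<in> VV p" "y \<in> VV p" "z \<in> VV p" for x y c z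
    by (rule BB_left[OF that])
  show "BB z (x + c *\<^sub>R y) = BB z x + c * BB z y" if "x \<in> VV p" "y \<in> VV p" "z \<in> VV p" for x y c z
    by (rule BB_right[OF that])
  show "LL (x + c *\<^sub>R y) = LL x + c * LL y" if "x \<in> VV p" "y \<in> VV p" for x y c
    by (rule LL_lin[OF that])
  show "x = 0" if "x \<in> VV p" "\<forall>y\<in>VV p. BB x y = 0" for x
    by (rule BB_inj[OF that])
qed

lemma unique_sol:
  assumes "U1 \<in> VV p" "U2 \<in> VV p" "\<forall>T\<in>VV p. BB U1 T = LL T" "\<forall>T\<in>VV p. BB U2 T = LL T"
  shows "U1 = U2"
proof -
  have "U1 + (-1) *\<^sub>R U2 = 0"
  proof (rule BB_inj)
    show "U1 + (-1) *\<^sub>R U2 \<in> VV p"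
      using subspace_VV assms(1,2) by (simp add: subspace_diff)
    show "\<forall>T\<in>VV p. BB (U1 + (-1) *\<^sub>R U2) T = 0"
    proof
      fix T assume T: "T \<in> VV p"
      have "BB (U1 + (-1) *\<^sub>R U2) T = BB U1 T + (-1) * BB U2 T" by (rule BB_left[OF assms(1,2) T])
      then show "BB (U1 + (-1) *\<^sub>R U2) T = 0" using assms(3,4) T by simp
    qed
  qed
  then show ?thesis by simp
qed

end

context sys
begin

lemma sol_iff:
  "(u \<in> Vp p \<and> r \<in> Vp p \<and> n \<in> Vp p \<and> m \<in> Vp p \<and>
    (\<forall>pp \<in> Vp p. - l2_edge h (\<lambda>x. matrix_inv (Cn x) *v n x) pp + l2_edge h u (dx pp)
        - l2_edge h (\<lambda>x. cross3 ie (r x)) pp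
      = - (uk \<bullet> pp 0) + ul \<bullet> pp h) \<and>
    (\<forall>q \<in> Vp p. - l2_edge h (\<lambda>x. matrix_inv (Cm x) *v m x) q + l2_edge h r (dx q)
      = - (rk \<bullet> q 0) + rl \<bullet> q h) \<and>
    (\<forall>v \<in> Vp p. l2_edge h (dx n) v + \<tau> * bdry_edge h u v
      = l2_edge h f v + \<tau> * (uk \<bullet> v 0 + ul \<bullet> v h)) \<and>
    (\<forall>w \<in> Vp p. l2_edge h (\<lambda>x. cross3 ie (n x)) w + l2_edge h (dx m) w + \<tau> * bdry_edge h r w
      = l2_edge h g w + \<tau> * (rk \<bullet> w 0 + rl \<bullet> w h)))
   \<longleftrightarrow> ((u, r, n, m) \<in> VV p \<and> (\<forall>T\<in>VV p. BB (u, r, n, m) T = LL T))"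
  (is "?L \<longleftrightarrow> ?R")
proof
  assume L: ?L
  show ?R
  proof
    show "(u, r, n, m) \<in> VV p" using L by (simp add: VV_def)
    show "\<forall>T\<in>VV p. BB (u, r, n, m) T = LL T"
    proof
      fix T assume "T \<in> VV p"
      then obtain pp q v w where Te: "T = (pp, q, v, w)" and VT: "pp \<in> Vp p" "q \<in> Vp p" "v \<in> Vp p" "w \<in> Vp p"
        unfolding VV_def by auto
      have E1: "- l2_edge h (\<lambda>x. matrix_inv (Cn x) *v n x) pp + l2_edge h u (dx pp)
        - l2_edge h (\<lambda>x. cross3 ie (r x)) pp = - (uk \<bullet> pp 0) + ul \<bullet> pp h" using L VT by blast
      have E2: "- l2_edge h (\<lambda>x. matrix_inv (Cm x) *v m x) q + l2_edge h r (dx q)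
        = - (rk \<bullet> q 0) + rl \<bullet> q h" using L VT by blast
      have E3: "l2_edge h (dx n) v + \<tau> * bdry_edge h u v
        = l2_edge h f v + \<tau> * (uk \<bullet> v 0 + ul \<bullet> v h)" using L VT by blast
      have E4: "l2_edge h (\<lambda>x. cross3 ie (n x)) w + l2_edge h (dx m) w + \<tau> * bdry_edge h r w
        = l2_edge h g w + \<tau> * (rk \<bullet> w 0 + rl \<bullet> w h)" using L VT by blast
      show "BB (u, r, n, m) T = LL T"
        unfolding Te BB_def LL_def prod.case BB'_def LL'_def using E1 E2 E3 E4 by linarith
    qed
  qed
next
  assume R: ?R
  then have V: "u \<in> Vp p" "r \<in> Vp p" "n \<in> Vp p" "m \<in> Vp p" by (auto simp: VV_def)
  define Z where "Z = (\<lambda>x::real. 0::real^3)"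
  have Z: "Z \<in> Vp p" unfolding Z_def by (rule Vp_zero)
  have dZ: "dx Z = Z" unfolding Z_def by (rule dx_zero)
  have bz: "bdry_edge h a Z = 0" for a by (simp add: bdry_edge_def Z_def)
  have lz: "l2_edge h a Z = 0" for a by (simp add: Z_def)
  have Z0: "Z 0 = 0" "Z h = 0" by (simp_all add: Z_def)
  have H: "BB' u r n m a b c d = LL' a b c d" if "a \<in> Vp p" "b \<in> Vp p" "c \<in> Vp p" "d \<in> Vp p" for a b c d
  proof -
    have "(a, b, c, d) \<in> VV p" using that by (simp add: VV_def)
    then have "BB (u, r, n, m) (a, b, c, d) = LL (a, b, c, d)" using R by blast
    then show ?thesis unfolding BB_def LL_def prod.case .
  qed
  show ?L
  proof (intro conjI V ballI)
    fix pp assume "pp \<in> Vp p"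
    from H[OF this Z Z Z] show "- l2_edge h (\<lambda>x. matrix_inv (Cn x) *v n x) pp + l2_edge h u (dx pp)
        - l2_edge h (\<lambda>x. cross3 ie (r x)) pp = - (uk \<bullet> pp 0) + ul \<bullet> pp h"
      unfolding BB'_def LL'_def dZ lz bz Z0 by simp
  next
    fix q assume "q \<in> Vp p"
    from H[OF Z this Z Z] show "- l2_edge h (\<lambda>x. matrix_inv (Cm x) *v m x) q + l2_edge h r (dx q)
      = - (rk \<bullet> q 0) + rl \<bullet> q h"
      unfolding BB'_def LL'_def dZ lz bz Z0 by simp
  next
    fix v assume "v \<in> Vp p"
    from H[OF Z Z this Z] show "l2_edge h (dx n) v + \<tau> * bdry_edge h u v
      = l2_edge h f v + \<tau> * (uk \<bullet> v 0 + ul \<bullet> v h)"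
      unfolding BB'_def LL'_def dZ lz bz Z0 by simp
  next
    fix w assume "w \<in> Vp p"
    from H[OF Z Z Z this] show "l2_edge h (\<lambda>x. cross3 ie (n x)) w + l2_edge h (dx m) w + \<tau> * bdry_edge h r w
      = l2_edge h g w + \<tau> * (rk \<bullet> w 0 + rl \<bullet> w h)"
      unfolding BB'_def LL'_def dZ lz bz Z0 by simp
  qed
qed

end

theorem lemma3p4:
  fixes nk nl :: "real^3" and p :: nat and \<tau> :: real
    and uk ul rk rl :: "real^3"
    and f g :: "real \<Rightarrow> real^3"
    and Cn Cm :: "real \<Rightarrow> real^3^3" and \<alpha>n \<beta>n \<alpha>m \<beta>m :: real
  defines "h \<equiv> edge_len nk nl" and "ie \<equiv> edge_dir nk nl"
  assumes "nk \<noteq> nl"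
    and "\<tau> > 0"
    and "coeff_ok h Cn \<alpha>n \<beta>n" and "coeff_ok h Cm \<alpha>m \<beta>m"
    and "L2_edge h f" and "L2_edge h g"
  shows "\<exists>!(u, r, n, m). u \<in> Vp p \<and> r \<in> Vp p \<and> n \<in> Vp p \<and> m \<in> Vp p \<and>
    (\<forall>pp \<in> Vp p. - l2_edge h (\<lambda>x. matrix_inv (Cn x) *v n x) pp + l2_edge h u (dx pp)
        - l2_edge h (\<lambda>x. cross3 ie (r x)) pp
      = - (uk \<bullet> pp 0) + ul \<bullet> pp h) \<and>
    (\<forall>q \<in> Vp p. - l2_edge h (\<lambda>x. matrix_inv (Cm x) *v m x) q + l2_edge h r (dx q)
      = - (rk \<bullet> q 0) + rl \<bullet> q h) \<and>
    (\<forall>v \<in> Vp p. l2_edge h (dx n) v + \<tau> * bdry_edge h u v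
      = l2_edge h f v + \<tau> * (uk \<bullet> v 0 + ul \<bullet> v h)) \<and>
    (\<forall>w \<in> Vp p. l2_edge h (\<lambda>x. cross3 ie (n x)) w + l2_edge h (dx m) w + \<tau> * bdry_edge h r w
      = l2_edge h g w + \<tau> * (rk \<bullet> w 0 + rl \<bullet> w h))"
proof -
  have hpos: "h > 0" using assms(3) by (simp add: h_def edge_len_def)
  interpret S: sys h ie \<tau> Cn Cm \<alpha>n \<beta>n \<alpha>m \<beta>m p uk ul rk rl f g
    by unfold_locales (use hpos assms(4-8) in auto)
  obtain U where U: "U \<in> VV p" "\<forall>T\<in>VV p. S.BB U T = S.LL T" using S.exists_sol by blast
  obtain u0 r0 n0 m0 where Ue: "U = (u0, r0, n0, m0)" by (cases U) blast
  show ?thesis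
  proof (rule ex1I[of _ "(u0, r0, n0, m0)"])
    show "case (u0, r0, n0, m0) of (u, r, n, m) \<Rightarrow> u \<in> Vp p \<and> r \<in> Vp p \<and> n \<in> Vp p \<and> m \<in> Vp p \<and>
    (\<forall>pp \<in> Vp p. - l2_edge h (\<lambda>x. matrix_inv (Cn x) *v n x) pp + l2_edge h u (dx pp)
        - l2_edge h (\<lambda>x. cross3 ie (r x)) pp
      = - (uk \<bullet> pp 0) + ul \<bullet> pp h) \<and>
    (\<forall>q \<in> Vp p. - l2_edge h (\<lambda>x. matrix_inv (Cm x) *v m x) q + l2_edge h r (dx q)
      = - (rk \<bullet> q 0) + rl \<bullet> q h) \<and>
    (\<forall>v \<in> Vp p. l2_edge h (dx n) v + \<tau> * bdry_edge h u v
      = l2_edge h f v + \<tau> * (uk \<bullet> v 0 + ul \<bullet> v h)) \<and>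
    (\<forall>w \<in> Vp p. l2_edge h (\<lambda>x. cross3 ie (n x)) w + l2_edge h (dx m) w + \<tau> * bdry_edge h r w
      = l2_edge h g w + \<tau> * (rk \<bullet> w 0 + rl \<bullet> w h))"
      unfolding prod.case S.sol_iff using U Ue by simp
  next
    fix Y assume Y: "case Y of (u, r, n, m) \<Rightarrow> u \<in> Vp p \<and> r \<in> Vp p \<and> n \<in> Vp p \<and> m \<in> Vp p \<and>
    (\<forall>pp \<in> Vp p. - l2_edge h (\<lambda>x. matrix_inv (Cn x) *v n x) pp + l2_edge h u (dx pp)
        - l2_edge h (\<lambda>x. cross3 ie (r x)) pp
      = - (uk \<bullet> pp 0) + ul \<bullet> pp h) \<and>
    (\<forall>q \<in> Vp p. - l2_edge h (\<lambda>x. matrix_inv (Cm x) *v m x) q + l2_edge h r (dx q)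
      = - (rk \<bullet> q 0) + rl \<bullet> q h) \<and>
    (\<forall>v \<in> Vp p. l2_edge h (dx n) v + \<tau> * bdry_edge h u v
      = l2_edge h f v + \<tau> * (uk \<bullet> v 0 + ul \<bullet> v h)) \<and>
    (\<forall>w \<in> Vp p. l2_edge h (\<lambda>x. cross3 ie (n x)) w + l2_edge h (dx m) w + \<tau> * bdry_edge h r w
      = l2_edge h g w + \<tau> * (rk \<bullet> w 0 + rl \<bullet> w h))"
    obtain a b c d where Ye: "Y = (a, b, c, d)" by (cases Y) blast
    have "(a, b, c, d) \<in> VV p \<and> (\<forall>T\<in>VV p. S.BB (a, b, c, d) T = S.LL T)"
      using Y unfolding Ye prod.case S.sol_iff .
    then show "Y = (u0, r0, n0, m0)"
      using S.unique_sol[of "(a, b, c, d)" U] U Ue Ye by simp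
  qed
qed

end
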